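(* Let $m\ge 2$, $n_b=m-1$, and let $z=(z^1,\dots,z^m)$ be coordinates on $\mathcal Z$ with $z^1=y^1$, $z^i=(y^i,\hat z^i)$ for $2\le i\le m-1$ ($y^i$ possibly empty), $z^m=\hat z^m$. On $\mathcal Z\times\mathbb R$ (with time coordinate $t$) consider the Pfaffian systems $\Xi^i$, $i=1,\dots,n_b$, spanned by the 1-forms $$\sum_{k=1}^{i} a^{i,j}_{k,\alpha}(z^1,\dots,z^i,\hat z^{i+1})\,\mathrm d z^{k,\alpha}-b^{i,j}(z^1,\dots,z^i,\hat z^{i+1})\,\mathrm dt,\qquad j=1,\dots,\dim(\hat z^{i+1}),$$ (summation over $\alpha$) such that for the corresponding implicit equations $\Xi_e^i:\ \sum_k a^i_k\dot z^k-b^i=0$ the square Jacobian $[\partial_{\hat z^{i+1}}\Xi_e^i]$ is regular. Let $S_{d,k}=\{\Xi^1,\dots,\Xi^{n_b-k}\}$ for $k=0,\dots,n_b$. Then: (a) for $k=0,\dots,n_b-1$, the distribution $\{\partial_{\hat z^{m-k}}\}$ is involutive, is contained in $\mathcal V(S_{d,k})^\perp$, and $\partial_{\hat z^{m-k}}\in\mathcal C(S_{d,k+1})$; (b) for $k=1,\dots,n_b$, each subsystem $\Xi^k$ is parameterizable with respect to the non-derivative variables $\hat z^{k+1}$, i.e. locally $\hat z^{k+1}=g^{k+1}(z^1,\dots,z^k,\dot z^1,\dots,\dot z^k)$; (c) if for some $k$ the block $z^k=(y^k,\hat z^k)$ contains variables $y^k$ (i.e. $n_{z^k}>n_{\hat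 z^k}$), then $\partial_{y^k}\in\mathcal C(S_{d,m-k})$.
   Context: A Pfaffian system $P$ on a manifold is a codistribution spanned by 1-forms. Its annihilator $P^\perp$ is the distribution of vector fields $w$ with $w\rfloor\omega=0$ for all $\omega\in P$. For a Pfaffian system on a bundle $\mathfrak X\times\mathbb R\to\mathbb R$ (time $t$), the vertical annihilator $\mathcal V(P)^\perp$ is the annihilator of the extended system $\{P,\mathrm dt\}$. A Cauchy characteristic vector field $v$ of $P$ satisfies $v\rfloor P=0$ and $v\rfloor\mathrm dP\subset P$; $\mathcal C(P)$ is the distribution of all Cauchy characteristic vector fields (for the empty system it is the whole tangent bundle). A Pfaffian system $P$ spanned by $n_P$ forms $m^i_\alpha(\xi)\mathrm d\xi^\alpha-n^i(\xi)\mathrm dt$ is called parameterizable with respect to $\hat\xi$ if there are coordinates $(\bar\xi,\hat\xi)$, $\xi=\psi(\bar\xi,\hat\xi)$, with $n_{\hat\xi}=n_P$, in which $P$ is spanned by forms $q^i_\alpha(\bar\xi,\hat\xi)\mathrm d\bar\xi^\alpha-r^i(\bar\xi,\hat\xi)\mathrm dt$ (no $\mathrm d\hat\xi$ appears) and the Jacobian of $q^i_\alpha(\bar\xi,\hat\xi)\dot{\bar\xi}^\alpha-r^i(\bar\xi,\hat\xi)$ with respect to $\hat\xi$ is regular; then locally $\hat\xi=g(\bar\xi,\dot{\bar\xi})$. *)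

theory Defs
  imports "HOL-Analysis.Analysis"
begin

text \<open>Coordinates: points of the total space (z,t) are vectors in real^'i, where the finite
 type 'i indexes all coordinates; one designated index is the time coordinate t.\<close>

type_synonym 'i pt = "real ^ 'i"
type_synonym 'i form = "real ^ 'i \<Rightarrow> real ^ 'i"
type_synonym 'i vfield = "real ^ 'i \<Rightarrow> real ^ 'i"

definition pd :: "'i::finite \<Rightarrow> (real ^ 'i \<Rightarrow> real) \<Rightarrow> real ^ 'i \<Rightarrow> real" where
  "pd c f p = deriv (\<lambda>s. f (p + s *\<^sub>R axis c 1)) 0"

fun iter_pd :: "'i::finite list \<Rightarrow> (real ^ 'i \<Rightarrow> real) \<Rightarrow> real ^ 'i \<Rightarrow> real" where
  "iter_pd [] f = f"
| "iter_pd (c # cs) f = pd c (iter_pd cs f)"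

definition smooth_on :: "(real ^ 'i::finite) set \<Rightarrow> (real ^ 'i \<Rightarrow> real) \<Rightarrow> bool" where
  "smooth_on U f \<longleftrightarrow> (\<forall>cs. continuous_on U (iter_pd cs f) \<and>
      (\<forall>c. \<forall>p\<in>U. (\<lambda>s. iter_pd cs f (p + s *\<^sub>R axis c 1)) field_differentiable (at 0)))"

definition smooth_map_on :: "(real ^ 'i::finite) set \<Rightarrow> (real ^ 'i \<Rightarrow> real ^ 'i) \<Rightarrow> bool" where
  "smooth_map_on U F \<longleftrightarrow> (\<forall>c. smooth_on U (\<lambda>p. F p $ c))"

definition sys_at :: "('i::finite form) set \<Rightarrow> real ^ 'i \<Rightarrow> (real ^ 'i) set" where
  "sys_at P p = span ((\<lambda>\<omega>. \<omega> p) ` P)"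

text \<open>Vertical annihilator: annihilator of the extended system {P, dt}.\<close>
definition vert_annih :: "'i::finite \<Rightarrow> ('i form) set \<Rightarrow> real ^ 'i \<Rightarrow> (real ^ 'i) set" where
  "vert_annih tc P p =
     {x. \<forall>\<theta>\<in>span ((\<lambda>\<omega>. \<omega> p) ` P \<union> {axis tc 1}). \<theta> \<bullet> x = 0}"

definition int_d :: "'i::finite vfield \<Rightarrow> 'i form \<Rightarrow> real ^ 'i \<Rightarrow> real ^ 'i" where
  "int_d v \<omega> p = (\<chi> j. \<Sum>i\<in>UNIV. v p $ i * (pd i (\<lambda>q. \<omega> q $ j) p - pd j (\<lambda>q. \<omega> q $ i) p))"

text \<open>Cauchy characteristic vector field of a Pfaffian system on U:
 v \<rfloor> P = 0 and v \<rfloor> dP \<subseteq> P (checked on the generators).\<close>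
definition cauchy_char :: "(real ^ 'i::finite) set \<Rightarrow> ('i form) set \<Rightarrow> 'i vfield \<Rightarrow> bool" where
  "cauchy_char U P v \<longleftrightarrow>
     (\<forall>p\<in>U. \<forall>\<omega>\<in>P. \<omega> p \<bullet> v p = 0 \<and> int_d v \<omega> p \<in> sys_at P p)"

definition lie :: "'i::finite vfield \<Rightarrow> 'i vfield \<Rightarrow> real ^ 'i \<Rightarrow> real ^ 'i" where
  "lie v w p = (\<chi> c. \<Sum>d\<in>UNIV. v p $ d * pd d (\<lambda>q. w q $ c) p - w p $ d * pd d (\<lambda>q. v q $ c) p)"

definition involutive :: "(real ^ 'i::finite) set \<Rightarrow> (real ^ 'i \<Rightarrow> (real ^ 'i) set) \<Rightarrow> bool" where
  "involutive U D \<longleftrightarrow> (\<forall>v w. smooth_map_on U v \<and> smooth_map_on U w \<and>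
       (\<forall>p\<in>U. v p \<in> D p \<and> w p \<in> D p) \<longrightarrow> (\<forall>p\<in>U. lie v w p \<in> D p))"

definition coord_dist :: "'i::finite set \<Rightarrow> real ^ 'i \<Rightarrow> (real ^ 'i) set" where
  "coord_dist C p = span ((\<lambda>c. axis c 1) ` C)"

definition regular_mat :: "'j set \<Rightarrow> 'h set \<Rightarrow> ('j \<Rightarrow> 'h \<Rightarrow> real) \<Rightarrow> bool" where
  "regular_mat J H M \<longleftrightarrow> finite J \<and> finite H \<and> card J = card H \<and>
     (\<forall>x. (\<forall>j\<in>J. (\<Sum>h\<in>H. M j h * x h) = 0) \<longrightarrow> (\<forall>h\<in>H. x h = 0))"

definition pullback :: "(real ^ 'i::finite \<Rightarrow> real ^ 'i) \<Rightarrow> 'i form \<Rightarrow> 'i form" where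
  "pullback \<psi> \<omega> q = (\<chi> c. \<Sum>d\<in>UNIV. \<omega> (\<psi> q) $ d * pd c (\<lambda>q'. \<psi> q' $ d) q)"

text \<open>Parameterizability of the Pfaffian system spanned by the n_P forms \<omega> j, j \<in> J, on U
 (time coordinate tc) with respect to the coordinates H: there is a coordinate change
 \<xi> = \<psi>(\<xi>bar,\<xi>hat) (a diffeomorphism V \<rightarrow> U leaving t and the coordinates \<xi>hat = H unchanged),
 with n_H = n_P, in whose coordinates the system is spanned by forms \<theta> j without d\<xi>hat
 components, such that the Jacobian of \<theta> j \<cdot> (\<xi>bar', 1) w.r.t. \<xi>hat is regular.\<close>
definition parameterizable ::
  "'i::finite \<Rightarrow> (real ^ 'i) set \<Rightarrow> 'j set \<Rightarrow> ('j \<Rightarrow> 'i form) \<Rightarrow> 'i set \<Rightarrow> bool" where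
  "parameterizable tc U J \<omega> H \<longleftrightarrow> finite J \<and> card H = card J \<and> tc \<notin> H \<and>
     (\<exists>V \<psi> \<psi>inv \<theta>. open V \<and> \<psi> ` V = U \<and> inj_on \<psi> V \<and>
        smooth_map_on V \<psi> \<and> smooth_map_on U \<psi>inv \<and> (\<forall>q\<in>V. \<psi>inv (\<psi> q) = q) \<and>
        (\<forall>q\<in>V. \<psi> q $ tc = q $ tc \<and> (\<forall>h\<in>H. \<psi> q $ h = q $ h)) \<and>
        (\<forall>j\<in>J. smooth_map_on V (\<theta> j)) \<and>
        (\<forall>j\<in>J. \<forall>q\<in>V. \<forall>h\<in>H. \<theta> j q $ h = 0) \<and>
        (\<forall>q\<in>V. span ((\<lambda>j. \<theta> j q) ` J) = span ((\<lambda>j. pullback \<psi> (\<omega> j) q) ` J)) \<and>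
        (\<forall>q\<in>V. \<forall>v. v $ tc = 1 \<longrightarrow>
            regular_mat J H (\<lambda>j h. pd h (\<lambda>q'. \<theta> j q' \<bullet> v) q)))"

text \<open>Local solvability of the implicit equations \<omega> j \<cdot> (\<xi>', 1) = 0 for the coordinates H:
 near every solution (p0, v0) there is a continuous g depending only on the coordinates in B
 and their velocities such that the solutions are exactly those with p_H = g(p_B, v_B).\<close>
definition locally_solvable ::
  "'i::finite \<Rightarrow> (real ^ 'i) set \<Rightarrow> 'j set \<Rightarrow> ('j \<Rightarrow> 'i form) \<Rightarrow> 'i set \<Rightarrow> 'i set \<Rightarrow> bool" where
  "locally_solvable tc U J \<omega> H B \<longleftrightarrow>
     (\<forall>p0\<in>U. \<forall>v0. v0 $ tc = 1 \<and> (\<forall>j\<in>J. \<omega> j p0 \<bullet> v0 = 0) \<longrightarrow>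
        (\<exists>N g. open N \<and> (p0, v0) \<in> N \<and> continuous_on N (\<lambda>(p, v). g p v) \<and>
           (\<forall>p v p' v'. (\<forall>c\<in>B. p $ c = p' $ c \<and> v $ c = v' $ c) \<longrightarrow> g p v = g p' v') \<and>
           (\<forall>(p, v)\<in>N. p \<in> U \<and> v $ tc = 1 \<longrightarrow>
              ((\<forall>j\<in>J. \<omega> j p \<bullet> v = 0) \<longleftrightarrow> (\<forall>h\<in>H. p $ h = g p v $ h)))))"

end

theory Submission
  imports Defs
begin


lemma ev_in_open:
  fixes p :: "real^'i::finite"
  assumes "open U" "p \<in> U"
  shows "\<forall>\<^sub>F s in nhds (0::real). p + s *\<^sub>R a \<in> U"
proof -
  have "((\<lambda>s::real. p + s *\<^sub>R a) \<longlongrightarrow> p + 0 *\<^sub>R a) (nhds 0)"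
    by (intro tendsto_intros filterlim_ident)
  then have "((\<lambda>s::real. p + s *\<^sub>R a) \<longlongrightarrow> p) (nhds 0)" by simp
  then show ?thesis using assms topological_tendstoD by blast
qed

lemma pd_zero_ev:
  assumes "\<forall>\<^sub>F s in nhds (0::real). f (p + s *\<^sub>R axis c 1) = f p"
  shows "pd c f p = 0"
proof -
  have "DERIV (\<lambda>s. f (p + s *\<^sub>R axis c 1)) 0 :> 0 \<longleftrightarrow> DERIV (\<lambda>s. f p) 0 :> 0"
    by (rule DERIV_cong_ev) (use assms in auto)
  then have "DERIV (\<lambda>s. f (p + s *\<^sub>R axis c 1)) 0 :> 0" by simp
  then show ?thesis unfolding pd_def by (rule DERIV_imp_deriv)
qed

lemma pd_zero_open:
  assumes "open U" "p \<in> U" "\<And>q. q \<in> U \<Longrightarrow> f q = f p \<or> q $ c \<noteq> p $ c \<and> False \<Longrightarrow> True"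
    "\<And>q. q \<in> U \<Longrightarrow> (\<forall>d. d \<noteq> c \<longrightarrow> q $ d = p $ d) \<Longrightarrow> f q = f p"
  shows "pd c f p = 0"
proof (rule pd_zero_ev)
  show "\<forall>\<^sub>F s in nhds 0. f (p + s *\<^sub>R axis c 1) = f p"
    using ev_in_open[OF assms(1,2), of "axis c 1"]
    by eventually_elim (rule assms(4), auto simp: axis_def)
qed

lemma pd_zero_on:
  assumes "open U" "p \<in> U" "\<And>q. q \<in> U \<Longrightarrow> f q = 0"
  shows "pd c f p = 0"
proof (rule pd_zero_ev)
  show "\<forall>\<^sub>F s in nhds 0. f (p + s *\<^sub>R axis c 1) = f p"
    using ev_in_open[OF assms(1,2), of "axis c 1"]
    by eventually_elim (simp add: assms)
qed

lemma pd_coord: "pd c (\<lambda>q. q $ d) p = (if c = d then 1 else 0)"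
proof -
  have "DERIV (\<lambda>s. (p + s *\<^sub>R axis c 1) $ d) 0 :> (if c = d then 1 else 0)"
    by (auto simp: axis_def intro!: derivative_eq_intros)
  then show ?thesis unfolding pd_def by (rule DERIV_imp_deriv)
qed

lemma pd_const: "pd c (\<lambda>q. k) p = 0"
  by (rule pd_zero_ev) simp



lemma mv_ineq:
  fixes \<phi> :: "real \<Rightarrow> real"
  assumes der: "\<And>t. min 0 b \<le> t \<Longrightarrow> t \<le> max 0 b \<Longrightarrow> DERIV \<phi> t :> \<phi>' t"
    and bd: "\<And>t. min 0 b \<le> t \<Longrightarrow> t \<le> max 0 b \<Longrightarrow> \<bar>\<phi>' t - K\<bar> \<le> e"
  shows "\<bar>\<phi> b - \<phi> 0 - b * K\<bar> \<le> e * \<bar>b\<bar>"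
proof (cases "b = 0")
  case True then show ?thesis by simp
next
  case False
  show ?thesis
  proof (cases "0 < b")
    case True
    then obtain z where z: "0 < z" "z < b" "\<phi> b - \<phi> 0 = (b - 0) * \<phi>' z"
      using MVT2[of 0 b \<phi> \<phi>'] der by auto
    have "\<phi> b - \<phi> 0 - b * K = b * (\<phi>' z - K)" using z by (simp add: algebra_simps)
    then have "\<bar>\<phi> b - \<phi> 0 - b * K\<bar> = \<bar>b\<bar> * \<bar>\<phi>' z - K\<bar>" by (simp add: abs_mult)
    also have "\<dots> \<le> \<bar>b\<bar> * e" using bd[of z] z True by (intro mult_left_mono) auto
    finally show ?thesis by (simp add: mult.commute)
  next
    case False
    with \<open>b \<noteq> 0\<close> have b: "b < 0" by simp
    then obtain z where z: "b < z" "z < 0" "\<phi> 0 - \<phi> b = (0 - b) * \<phi>' z"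
      using MVT2[of b 0 \<phi> \<phi>'] der by auto
    have "\<bar>\<phi> b - \<phi> 0 - b * K\<bar> = \<bar>b\<bar> * \<bar>\<phi>' z - K\<bar>"
    proof -
      have "\<phi> b - \<phi> 0 - b * K = b * (\<phi>' z - K)" using z by (simp add: algebra_simps)
      then show ?thesis by (simp add: abs_mult)
    qed
    also have "\<dots> \<le> \<bar>b\<bar> * e" using bd[of z] z b by (intro mult_left_mono) auto
    finally show ?thesis by (simp add: mult.commute)
  qed
qed

lemma telescope:
  fixes f :: "real^'i::finite \<Rightarrow> real"
  assumes near: "\<And>y. norm (y - x) < d \<Longrightarrow> y \<in> U \<and> (\<forall>c. \<bar>D c y - D c x\<bar> \<le> e)"
    and der: "\<And>y c. y \<in> U \<Longrightarrow> ((\<lambda>s. f (y + s *\<^sub>R axis c 1)) has_real_derivative D c y) (at 0)"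
    and e: "e \<ge> 0"
  shows "\<forall>a. (\<forall>c. c \<notin> set cs \<longrightarrow> a $ c = 0) \<longrightarrow> norm a < d \<longrightarrow>
     \<bar>f (x + a) - f x - (\<Sum>c\<in>UNIV. a $ c * D c x)\<bar> \<le> e * real (length cs) * norm a"
proof (induction cs)
  case Nil
  show ?case
  proof (intro allI impI)
    fix a :: "real^'i" assume "\<forall>c. c \<notin> set [] \<longrightarrow> a $ c = 0"
    then have "a = 0" by (simp add: vec_eq_iff)
    then show "\<bar>f (x + a) - f x - (\<Sum>c\<in>UNIV. a $ c * D c x)\<bar> \<le> e * real (length []) * norm a" by simp
  qed
next
  case (Cons c cs)
  show ?case
  proof (intro allI impI)
    fix a :: "real^'i"
    assume a0: "\<forall>c'. c' \<notin> set (c # cs) \<longrightarrow> a $ c' = 0" and na: "norm a < d"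
    define a' where "a' = a - (a $ c) *\<^sub>R axis c 1"
    have a'c: "a' $ d' = (if d' = c then 0 else a $ d')" for d'
      by (simp add: a'_def axis_def)
    have "norm a' \<le> norm a"
      by (rule norm_le_componentwise_cart) (simp add: a'c)
    have a'0: "\<forall>c'. c' \<notin> set cs \<longrightarrow> a' $ c' = 0" using a0 by (auto simp: a'c)
    have IH: "\<bar>f (x + a') - f x - (\<Sum>c\<in>UNIV. a' $ c * D c x)\<bar> \<le> e * real (length cs) * norm a'"
      using Cons.IH a'0 \<open>norm a' \<le> norm a\<close> na by auto
    define \<phi> where "\<phi> s = f (x + a' + s *\<^sub>R axis c 1)" for s
    have inball: "norm (x + a' + t *\<^sub>R axis c 1 - x) < d" if "min 0 (a$c) \<le> t" "t \<le> max 0 (a$c)" for t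
    proof -
      have "norm (a' + t *\<^sub>R axis c 1) \<le> norm a"
        by (rule norm_le_componentwise_cart) (use that in \<open>auto simp: a'c axis_def\<close>)
      then show ?thesis using na by simp
    qed
    have mv: "\<bar>\<phi> (a$c) - \<phi> 0 - (a$c) * D c x\<bar> \<le> e * \<bar>a$c\<bar>"
    proof (rule mv_ineq[where \<phi>'="\<lambda>t. D c (x + a' + t *\<^sub>R axis c 1)"])
      fix t assume t: "min 0 (a$c) \<le> t" "t \<le> max 0 (a$c)"
      define y where "y = x + a' + t *\<^sub>R axis c 1"
      have yU: "y \<in> U" and yb: "\<bar>D c y - D c x\<bar> \<le> e" using near inball[OF t] unfolding y_def by auto
      then show "\<bar>D c (x + a' + t *\<^sub>R axis c 1) - D c x\<bar> \<le> e" by (simp add: y_def)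
      have "((\<lambda>s. f (y + s *\<^sub>R axis c 1)) has_real_derivative D c y) (at (t + - t))"
        using der[OF yU] by simp
      then have "((\<lambda>s. f (y + (s + - t) *\<^sub>R axis c 1)) has_real_derivative D c y) (at t)"
        using DERIV_shift[of "\<lambda>s. f (y + s *\<^sub>R axis c 1)" "D c y" t "-t"] by simp
      then have "((\<lambda>s. f (y + (s - t) *\<^sub>R axis c 1)) has_real_derivative D c y) (at t)"
        by simp
      moreover have "(\<lambda>s. f (y + (s - t) *\<^sub>R axis c 1)) = \<phi>"
        by (rule ext) (simp add: \<phi>_def y_def algebra_simps)
      ultimately show "DERIV \<phi> t :> D c (x + a' + t *\<^sub>R axis c 1)" by (simp add: y_def)
    qed
    have phib: "\<phi> (a$c) = f (x + a)" by (simp add: \<phi>_def a'_def)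
    have phi0: "\<phi> 0 = f (x + a')" by (simp add: \<phi>_def)
    have sumeq: "(\<Sum>c'\<in>UNIV. a $ c' * D c' x) = a $ c * D c x + (\<Sum>c'\<in>UNIV. a' $ c' * D c' x)"
    proof -
      have "(\<Sum>c'\<in>UNIV. a $ c' * D c' x) = (\<Sum>c'\<in>UNIV. (if c' = c then a $ c * D c x else 0) + a' $ c' * D c' x)"
        by (rule sum.cong) (auto simp: a'c)
      also have "\<dots> = a $ c * D c x + (\<Sum>c'\<in>UNIV. a' $ c' * D c' x)"
        by (simp add: sum.distrib)
      finally show ?thesis .
    qed
    have "\<bar>a $ c\<bar> \<le> norm a" by (rule component_le_norm_cart)
    have "\<bar>f (x + a) - f x - (\<Sum>c\<in>UNIV. a $ c * D c x)\<bar>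
       \<le> \<bar>\<phi> (a$c) - \<phi> 0 - (a$c) * D c x\<bar> + \<bar>f (x + a') - f x - (\<Sum>c\<in>UNIV. a' $ c * D c x)\<bar>"
      using phib phi0 sumeq by linarith
    also have "\<dots> \<le> e * \<bar>a$c\<bar> + e * real (length cs) * norm a'"
      using mv IH by linarith
    also have "\<dots> \<le> e * norm a + e * real (length cs) * norm a"
      using \<open>\<bar>a $ c\<bar> \<le> norm a\<close> \<open>norm a' \<le> norm a\<close> e
      by (intro add_mono mult_left_mono) auto
    also have "\<dots> = e * real (length (c # cs)) * norm a" by (simp add: algebra_simps)
    finally show "\<bar>f (x + a) - f x - (\<Sum>c\<in>UNIV. a $ c * D c x)\<bar> \<le> e * real (length (c # cs)) * norm a" .
  qed
qed



lemma partials_has_derivative: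
  fixes f :: "real^'i::finite \<Rightarrow> real"
  assumes U: "open U" "x \<in> U"
    and der: "\<And>y c. y \<in> U \<Longrightarrow> ((\<lambda>s. f (y + s *\<^sub>R axis c 1)) has_real_derivative D c y) (at 0)"
    and cont: "\<And>c. continuous_on U (D c)"
  shows "(f has_derivative (\<lambda>h. \<Sum>c\<in>UNIV. h$c * D c x)) (at x)"
  unfolding has_derivative_at_alt
proof (intro conjI allI impI)
  show "bounded_linear (\<lambda>h. \<Sum>c\<in>UNIV. h$c * D c x)"
    by (intro bounded_linear_intros bounded_linear_vec_nth)
  fix e :: real assume "e > 0"
  obtain cs :: "'i list" where cs: "set cs = UNIV" using finite_list[of "UNIV::'i set"] by auto
  define n where "n = length cs"
  define e' where "e' = e / (real n + 1)"
  have "e' > 0" using \<open>e > 0\<close> by (simp add: e'_def)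
  have "\<forall>\<^sub>F y in at x. \<forall>c. dist (D c y) (D c x) < e'"
  proof (rule eventually_all_finite)
    fix c
    have "isCont (D c) x" using cont[of c] U continuous_on_eq_continuous_at by blast
    then have "(D c \<longlongrightarrow> D c x) (at x)" by (simp add: isCont_def)
    then show "\<forall>\<^sub>F y in at x. dist (D c y) (D c x) < e'" using \<open>e' > 0\<close> tendstoD by blast
  qed
  moreover have "\<forall>\<^sub>F y in at x. y \<in> U" using eventually_at_in_open'[OF U] .
  ultimately have "\<forall>\<^sub>F y in at x. y \<in> U \<and> (\<forall>c. dist (D c y) (D c x) < e')"
    by eventually_elim auto
  then obtain d where d: "d > 0" "\<And>y. y \<noteq> x \<Longrightarrow> dist y x < d \<Longrightarrow> y \<in> U \<and> (\<forall>c. dist (D c y) (D c x) < e')"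
    unfolding eventually_at by auto
  have near: "y \<in> U \<and> (\<forall>c. \<bar>D c y - D c x\<bar> \<le> e')" if "norm (y - x) < d" for y
  proof (cases "y = x")
    case True then show ?thesis using U \<open>e' > 0\<close> by auto
  next
    case False
    have "dist y x < d" using that by (simp add: dist_norm)
    then have "y \<in> U \<and> (\<forall>c. dist (D c y) (D c x) < e')" using d(2)[of y] False by blast
    then show ?thesis by (auto simp: dist_real_def less_imp_le)
  qed
  have tel: "\<forall>a. (\<forall>c. c \<notin> set cs \<longrightarrow> a $ c = 0) \<longrightarrow> norm a < d \<longrightarrow>
     \<bar>f (x + a) - f x - (\<Sum>c\<in>UNIV. a $ c * D c x)\<bar> \<le> e' * real (length cs) * norm a"
    by (rule telescope[where U=U]) (use near der \<open>e' > 0\<close> in auto)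
  show "\<exists>d>0. \<forall>y. norm (y - x) < d \<longrightarrow>
          norm (f y - f x - (\<Sum>c\<in>UNIV. (y - x) $ c * D c x)) \<le> e * norm (y - x)"
  proof (intro exI[of _ d] conjI allI impI)
    show "d > 0" by fact
    fix y assume y: "norm (y - x) < d"
    have "\<bar>f (x + (y - x)) - f x - (\<Sum>c\<in>UNIV. (y - x) $ c * D c x)\<bar> \<le> e' * real n * norm (y - x)"
      using tel[rule_format, of "y - x"] y cs by (simp add: n_def)
    also have "e' * real n \<le> e"
      using \<open>e > 0\<close> by (simp add: e'_def field_simps)
    then have "e' * real n * norm (y - x) \<le> e * norm (y - x)" by (intro mult_right_mono) auto
    finally show "norm (f y - f x - (\<Sum>c\<in>UNIV. (y - x) $ c * D c x)) \<le> e * norm (y - x)"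
      by simp
  qed
qed



lemma smooth_on_der:
  "smooth_on U f \<Longrightarrow> y \<in> U \<Longrightarrow> ((\<lambda>s. f (y + s *\<^sub>R axis c 1)) has_real_derivative pd c f y) (at 0)"
  unfolding smooth_on_def pd_def
  using DERIV_deriv_iff_field_differentiable iter_pd.simps(1) by metis

lemma smooth_on_cont: "smooth_on U f \<Longrightarrow> continuous_on U f"
  unfolding smooth_on_def using iter_pd.simps(1) by metis

lemma smooth_on_cont_pd: "smooth_on U f \<Longrightarrow> continuous_on U (pd c f)"
  unfolding smooth_on_def using iter_pd.simps by metis

lemma smooth_on_has_derivative:
  "open U \<Longrightarrow> x \<in> U \<Longrightarrow> smooth_on U f \<Longrightarrow> (f has_derivative (\<lambda>h. \<Sum>c\<in>UNIV. h$c * pd c f x)) (at x)"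
  by (rule partials_has_derivative) (auto intro: smooth_on_der smooth_on_cont_pd)

lemma sum_axis_nth:
  fixes H :: "'i::finite set"
  shows "(\<Sum>h\<in>H. a h *\<^sub>R (axis h 1 :: real^'i)) $ c = (if c \<in> H then a c else 0)"
  by (simp add: sum_component axis_def if_distrib cong: if_cong)

lemma cont_fst:
  "continuous_on U g \<Longrightarrow> continuous_on (U \<times> V) (\<lambda>x. g (fst x))"
  by (rule continuous_on_compose2[of U g _ fst]) (auto intro: continuous_intros)

lemma pd_sum_real:
  assumes "\<And>i. i \<in> I \<Longrightarrow> ((\<lambda>s. f i (p + s *\<^sub>R axis c 1)) has_real_derivative D i) (at 0)" "finite I"
  shows "pd c (\<lambda>q. \<Sum>i\<in>I. f i q) p = (\<Sum>i\<in>I. D i)"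
  unfolding pd_def by (rule DERIV_imp_deriv) (use assms in \<open>auto intro!: DERIV_sum\<close>)



context
  fixes tc :: "'i::finite" and U :: "(real^'i) set" and H B :: "'i set"
    and W :: "'i \<Rightarrow> real^'i \<Rightarrow> real^'i"
  assumes U: "open U"
    and HB: "H \<inter> B = {}" and tcH: "tc \<notin> H" and tcB: "tc \<notin> B"
    and sm: "\<forall>j\<in>H. \<forall>c. smooth_on U (\<lambda>p. W j p $ c)"
    and supp: "\<forall>j\<in>H. \<forall>p\<in>U. \<forall>c. c \<notin> B \<and> c \<noteq> tc \<longrightarrow> W j p $ c = 0"
    and dep: "\<forall>j\<in>H. \<forall>p\<in>U. \<forall>q\<in>U. (\<forall>c\<in>B \<union> H. p $ c = q $ c) \<longrightarrow> W j p = W j q"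
    and reg: "\<forall>p\<in>U. \<forall>v. v $ tc = 1 \<longrightarrow> regular_mat H H (\<lambda>j h. pd h (\<lambda>q. W j q \<bullet> v) p)"
begin

definition "Fj j x = W j (fst x) \<bullet> snd x"
definition "Phi x = (fst x + (\<Sum>h\<in>H. (Fj h x - fst x $ h) *\<^sub>R axis h 1), snd x)"
definition "DF j x y = (\<Sum>c\<in>UNIV. (\<Sum>d\<in>UNIV. fst y $ d * pd d (\<lambda>q. W j q $ c) (fst x)) * snd x $ c
      + W j (fst x) $ c * snd y $ c)"
definition "Phi' x y = (fst y + (\<Sum>h\<in>H. (DF h x y - fst y $ h) *\<^sub>R axis h 1), snd y)"

lemma Fj_der:
  assumes "j \<in> H" "fst x \<in> U"
  shows "(Fj j has_derivative DF j x) (at x)"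
proof -
  have d1: "((\<lambda>x. W j (fst x) $ c) has_derivative (\<lambda>y. \<Sum>d\<in>UNIV. fst y $ d * pd d (\<lambda>q. W j q $ c) (fst x))) (at x)" for c
  proof -
    have "((\<lambda>p. W j p $ c) has_derivative (\<lambda>h. \<Sum>d\<in>UNIV. h $ d * pd d (\<lambda>q. W j q $ c) (fst x))) (at (fst x))"
      using smooth_on_has_derivative[OF U assms(2)] sm assms(1) by blast
    from has_derivative_compose[OF has_derivative_fst[of "\<lambda>x. x" "\<lambda>x. x", OF has_derivative_ident] this]
    show ?thesis by simp
  qed
  have d2: "((\<lambda>x. snd x $ c) has_derivative (\<lambda>y. snd y $ c)) (at x)" for c
    by (intro bounded_linear.has_derivative[OF bounded_linear_compose[OF bounded_linear_vec_nth bounded_linear_snd]] has_derivative_ident)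
  have "((\<lambda>x. \<Sum>c\<in>UNIV. W j (fst x) $ c * snd x $ c) has_derivative
     (\<lambda>y. \<Sum>c\<in>UNIV. W j (fst x) $ c * snd y $ c + (\<Sum>d\<in>UNIV. fst y $ d * pd d (\<lambda>q. W j q $ c) (fst x)) * snd x $ c)) (at x)"
    by (intro has_derivative_sum has_derivative_mult d1 d2)
  then show ?thesis
    unfolding Fj_def DF_def inner_vec_def inner_real_def
    by (rule has_derivative_eq_rhs) (auto simp: algebra_simps)
qed

lemma Phi_der:
  assumes "fst x \<in> U"
  shows "(Phi has_derivative Phi' x) (at x)"
proof -
  have dn: "((\<lambda>x. fst x $ c) has_derivative (\<lambda>y. fst y $ c)) (at x)" for c
    by (intro bounded_linear.has_derivative[OF bounded_linear_compose[OF bounded_linear_vec_nth bounded_linear_fst]] has_derivative_ident)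
  show ?thesis
    unfolding Phi_def Phi'_def
    by (intro has_derivative_Pair has_derivative_add has_derivative_sum has_derivative_scaleR_left
        has_derivative_diff Fj_der dn has_derivative_fst has_derivative_snd has_derivative_ident assms) auto
qed

lemma Phi'_bl: "fst x \<in> U \<Longrightarrow> bounded_linear (Phi' x)"
  using Phi_der has_derivative_bounded_linear by blast

lemma Phi'_cont: "continuous_on (U \<times> UNIV) (\<lambda>x. Blinfun (Phi' x))"
proof (rule continuous_on_blinfun_componentwise)
  fix i :: "(real^'i) \<times> (real^'i)"
  have c1: "continuous_on (U \<times> UNIV) (\<lambda>x. pd d (\<lambda>q. W h q $ c) (fst x))" if "h \<in> H" for h c d
    using sm that by (intro cont_fst smooth_on_cont_pd) blast
  have c2: "continuous_on (U \<times> UNIV) (\<lambda>x. W h (fst x) $ c)" if "h \<in> H" for h c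
    using sm that by (intro cont_fst smooth_on_cont) blast
  have c3: "continuous_on (U \<times> (UNIV::(real^'i) set)) (\<lambda>x. snd x $ c)" for c
    by (intro continuous_intros)
  have cDF: "continuous_on (U \<times> UNIV) (\<lambda>x. DF h x i)" if "h \<in> H" for h
    unfolding DF_def
    by (intro continuous_on_sum continuous_on_add continuous_on_mult c1 c2 c3 continuous_on_const that)
  have "continuous_on (U \<times> UNIV) (\<lambda>x. Phi' x i)"
    unfolding Phi'_def
    by (intro continuous_on_Pair continuous_on_add continuous_on_sum continuous_on_scaleR
        continuous_on_diff cDF continuous_on_const)
  then show "continuous_on (U \<times> UNIV) (\<lambda>x. blinfun_apply (Blinfun (Phi' x)) i)"
    by (rule continuous_on_eq) (auto simp: bounded_linear_Blinfun_apply Phi'_bl)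
qed


lemma M_eq:
  assumes "p \<in> U" "j \<in> H"
  shows "pd d (\<lambda>q. W j q \<bullet> v) p = (\<Sum>c\<in>UNIV. pd d (\<lambda>q. W j q $ c) p * v $ c)"
  unfolding inner_vec_def inner_real_def
  by (rule pd_sum_real) (use sm assms in \<open>auto intro!: DERIV_cmult_right smooth_on_der\<close>)

lemma Phi'_inj:
  assumes p0: "p0 \<in> U" and v0: "v0 $ tc = 1"
  shows "inj (Phi' (p0, v0))"
proof -
  have lin: "linear (Phi' (p0, v0))" using Phi'_bl[of "(p0,v0)"] p0 bounded_linear.linear by auto
  show ?thesis unfolding linear_injective_0[OF lin]
  proof (intro allI impI)
    fix y :: "(real^'i) \<times> (real^'i)"
    assume y0: "Phi' (p0, v0) y = 0"
    obtain dp dv where y: "y = (dp, dv)" by (cases y)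
    have dv: "dv = 0" using arg_cong[OF y0, of snd] y by (simp add: Phi'_def)
    have comp: "dp $ c + (if c \<in> H then DF c (p0, v0) y - dp $ c else 0) = 0" for c
    proof -
      have "fst (Phi' (p0, v0) y) $ c = 0" using y0 by simp
      then show ?thesis unfolding Phi'_def using y by (simp only: fst_conv vector_add_component sum_axis_nth)
    qed
    have nH: "dp $ c = 0" if "c \<notin> H" for c using comp[of c] that by simp
    have DF0: "DF h (p0, v0) y = 0" if "h \<in> H" for h using comp[of h] that by simp
    have "regular_mat H H (\<lambda>j h. pd h (\<lambda>q. W j q \<bullet> v0) p0)" using reg p0 v0 by blast
    then have R: "\<And>x. (\<forall>j\<in>H. (\<Sum>h\<in>H. pd h (\<lambda>q. W j q \<bullet> v0) p0 * x h) = 0) \<Longrightarrow> (\<forall>h\<in>H. x h = 0)"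
      unfolding regular_mat_def by blast
    have "\<forall>h\<in>H. dp $ h = 0"
    proof (rule R[of "\<lambda>h. dp $ h"], intro ballI)
      fix j assume j: "j \<in> H"
      have "0 = DF j (p0, v0) y" using DF0 j by simp
      also have "\<dots> = (\<Sum>c\<in>UNIV. (\<Sum>d\<in>UNIV. dp $ d * pd d (\<lambda>q. W j q $ c) p0) * v0 $ c)"
        unfolding DF_def using y dv by simp
      also have "\<dots> = (\<Sum>d\<in>UNIV. dp $ d * (\<Sum>c\<in>UNIV. pd d (\<lambda>q. W j q $ c) p0 * v0 $ c))"
        unfolding sum_distrib_left sum_distrib_right by (subst sum.swap) (simp add: mult.assoc)
      also have "\<dots> = (\<Sum>d\<in>UNIV. dp $ d * pd d (\<lambda>q. W j q \<bullet> v0) p0)"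
        using M_eq[OF p0 j] by simp
      also have "\<dots> = (\<Sum>d\<in>H. dp $ d * pd d (\<lambda>q. W j q \<bullet> v0) p0)"
        by (rule sum.mono_neutral_right) (auto simp: nH)
      finally show "(\<Sum>h\<in>H. pd h (\<lambda>q. W j q \<bullet> v0) p0 * dp $ h) = 0" by (simp add: mult.commute)
    qed
    then have "dp = 0" using nH by (auto simp: vec_eq_iff)
    then show "y = 0" using y dv by (simp add: zero_prod_def)
  qed
qed


lemma Phi_comp: "fst (Phi z) $ c = (if c \<in> H then Fj c z else fst z $ c)" "snd (Phi z) = snd z"
  unfolding Phi_def by (simp only: fst_conv vector_add_component sum_axis_nth, simp) simp

lemma cont_vec_if:
  fixes P :: "'i \<Rightarrow> bool" and a :: "real^'i"
  shows "continuous_on UNIV (\<lambda>z::real^'i. \<chi> c. if P c then z $ c else a $ c)"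
proof (rule continuous_on_vec_lambda)
  fix c show "continuous_on UNIV (\<lambda>z::real^'i. if P c then z $ c else a $ c)"
    by (cases "P c") (auto intro: continuous_intros)
qed

lemma loc_solv: "locally_solvable tc U H W H B"
  unfolding locally_solvable_def
proof (intro ballI allI impI)
  fix p0 v0 assume p0: "p0 \<in> U" and hv: "v0 $ tc = 1 \<and> (\<forall>j\<in>H. W j p0 \<bullet> v0 = 0)"
  define x0 where "x0 = (p0, v0)"
  define f' where "f' x = Blinfun (Phi' x)" for x
  have lin: "linear (Phi' x0)" using Phi'_bl[of x0] p0 bounded_linear.linear by (auto simp: x0_def)
  obtain g0 where g0: "linear g0" "g0 \<circ> Phi' x0 = id"
    using linear_injective_left_inverse[OF lin] Phi'_inj[OF p0] hv x0_def by blast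
  define invf where "invf = Blinfun g0"
  have invf: "invf o\<^sub>L f' x0 = id_blinfun"
  proof (rule blinfun_eqI)
    fix i
    have "bounded_linear g0" using g0(1) linear_conv_bounded_linear by blast
    then show "blinfun_apply (invf o\<^sub>L f' x0) i = blinfun_apply id_blinfun i"
      using g0(2) Phi'_bl[of x0] p0
      by (simp add: invf_def f'_def bounded_linear_Blinfun_apply x0_def pointfree_idE)
  qed
  have opUU: "open (U \<times> (UNIV :: (real^'i) set))" using U by (simp add: open_Times)
  obtain U' V \<Psi> \<Psi>' where IFT: "open U'" "U' \<subseteq> U \<times> UNIV" "x0 \<in> U'" "open V" "Phi x0 \<in> V"
      "homeomorphism U' V Phi \<Psi>"
  proof (rule inverse_function_theorem[of "U \<times> UNIV" Phi f' x0 invf])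
    show "open (U \<times> UNIV)" using U by (simp add: open_Times)
    show "\<And>x. x \<in> U \<times> UNIV \<Longrightarrow> (Phi has_derivative blinfun_apply (f' x)) (at x)"
      using Phi_der Phi'_bl by (auto simp: f'_def bounded_linear_Blinfun_apply)
    show "continuous_on (U \<times> UNIV) f'" unfolding f'_def by (rule Phi'_cont)
    show "x0 \<in> U \<times> UNIV" using p0 by (simp add: x0_def)
    show "invf o\<^sub>L f' x0 = id_blinfun" by (rule invf)
  qed blast
  define \<pi> where "\<pi> z = ((\<chi> c. if c \<in> B then fst z $ c else (if c \<in> H then 0 else p0 $ c)),
                        (\<chi> c. if c \<in> B then snd z $ c else v0 $ c))" for z :: "(real^'i) \<times> (real^'i)"
  define \<pi>' where "\<pi>' z = ((\<chi> c. if c \<in> B \<union> H then fst z $ c else p0 $ c),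
                        (\<chi> c. if c \<in> B then snd z $ c else v0 $ c))" for z :: "(real^'i) \<times> (real^'i)"
  define N where "N = \<pi>' -` U' \<inter> \<pi> -` V"
  define g where "g p v = fst (\<Psi> (\<pi> (p, v)))" for p v
  have cpi: "continuous_on UNIV \<pi>"
  proof -
    have "continuous_on UNIV (\<lambda>z::(real^'i)\<times>(real^'i). (\<chi> c. if c \<in> B then fst z $ c else (if c \<in> H then 0 else p0 $ c)))"
    proof (rule continuous_on_vec_lambda)
      fix c show "continuous_on UNIV (\<lambda>z::(real^'i)\<times>(real^'i). if c \<in> B then fst z $ c else (if c \<in> H then 0 else p0 $ c))"
        by (cases "c \<in> B"; cases "c \<in> H") (auto intro!: continuous_intros)
    qed
    moreover have "continuous_on UNIV (\<lambda>z::(real^'i)\<times>(real^'i). (\<chi> c. if c \<in> B then snd z $ c else v0 $ c))"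
    proof (rule continuous_on_vec_lambda)
      fix c show "continuous_on UNIV (\<lambda>z::(real^'i)\<times>(real^'i). if c \<in> B then snd z $ c else v0 $ c)"
        by (cases "c \<in> B") (auto intro!: continuous_intros)
    qed
    ultimately show ?thesis unfolding \<pi>_def by (intro continuous_on_Pair)
  qed
  have cpi': "continuous_on UNIV \<pi>'"
  proof -
    have "continuous_on UNIV (\<lambda>z::(real^'i)\<times>(real^'i). (\<chi> c. if c \<in> B \<union> H then fst z $ c else p0 $ c))"
    proof (rule continuous_on_vec_lambda)
      fix c show "continuous_on UNIV (\<lambda>z::(real^'i)\<times>(real^'i). if c \<in> B \<union> H then fst z $ c else p0 $ c)"
        by (cases "c \<in> B \<union> H") (auto intro!: continuous_intros)
    qed
    moreover have "continuous_on UNIV (\<lambda>z::(real^'i)\<times>(real^'i). (\<chi> c. if c \<in> B then snd z $ c else v0 $ c))"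
    proof (rule continuous_on_vec_lambda)
      fix c show "continuous_on UNIV (\<lambda>z::(real^'i)\<times>(real^'i). if c \<in> B then snd z $ c else v0 $ c)"
        by (cases "c \<in> B") (auto intro!: continuous_intros)
    qed
    ultimately show ?thesis unfolding \<pi>'_def by (intro continuous_on_Pair)
  qed
  have "open N"
  proof -
    have "open (\<pi>' -` U' \<inter> UNIV)" using cpi' IFT(1) continuous_on_open_vimage[of UNIV \<pi>'] by blast
    moreover have "open (\<pi> -` V \<inter> UNIV)" using cpi IFT(4) continuous_on_open_vimage[of UNIV \<pi>] by blast
    ultimately show ?thesis unfolding N_def by auto
  qed
  have Fx0: "Fj h x0 = 0" if "h \<in> H" for h using hv that by (simp add: Fj_def x0_def)
  have pi'x0: "\<pi>' x0 = x0" by (simp add: \<pi>'_def x0_def vec_eq_iff)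
  have pix0: "\<pi> x0 = Phi x0"
  proof -
    have "fst (\<pi> x0) $ c = fst (Phi x0) $ c" for c
      using HB Fx0[of c] by (auto simp: \<pi>_def Phi_comp x0_def)
    moreover have "snd (\<pi> x0) = snd (Phi x0)"
      by (simp add: \<pi>_def Phi_comp x0_def vec_eq_iff)
    ultimately show ?thesis by (simp add: prod_eq_iff vec_eq_iff)
  qed
  have x0N: "(p0, v0) \<in> N" unfolding N_def using pi'x0 pix0 IFT(3,5) by (simp add: x0_def)
  have cg: "continuous_on N (\<lambda>(p, v). g p v)"
  proof -
    have "continuous_on N (\<lambda>z. fst (\<Psi> (\<pi> z)))"
    proof (intro continuous_on_fst continuous_on_compose2[OF homeomorphism_cont2[OF IFT(6)]])
      show "continuous_on N \<pi>" using cpi continuous_on_subset by blast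
      show "\<pi> ` N \<subseteq> V" unfolding N_def by auto
    qed
    then show ?thesis by (simp add: g_def case_prod_beta')
  qed
  have gdep: "\<forall>p v p' v'. (\<forall>c\<in>B. p $ c = p' $ c \<and> v $ c = v' $ c) \<longrightarrow> g p v = g p' v'"
  proof (intro allI impI)
    fix p v p' v' :: "real^'i" assume "\<forall>c\<in>B. p $ c = p' $ c \<and> v $ c = v' $ c"
    then have "\<pi> (p, v) = \<pi> (p', v')" by (simp add: \<pi>_def vec_eq_iff)
    then show "g p v = g p' v'" by (simp add: g_def)
  qed
  have equiv: "(\<forall>j\<in>H. W j p \<bullet> v = 0) \<longleftrightarrow> (\<forall>h\<in>H. p $ h = g p v $ h)"
    if pvN: "(p, v) \<in> N" and pU: "p \<in> U" and vtc: "v $ tc = 1" for p v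
  proof -
    define x where "x = \<pi>' (p, v)"
    have xU': "x \<in> U'" using pvN by (simp add: N_def x_def)
    have piV: "\<pi> (p, v) \<in> V" using pvN by (simp add: N_def)
    have p1U: "fst x \<in> U" using xU' IFT(2) by auto
    have fstx: "fst x $ c = (if c \<in> B \<union> H then p $ c else p0 $ c)" for c by (simp add: x_def \<pi>'_def)
    have sndx: "snd x = snd (\<pi> (p, v))" by (simp add: x_def \<pi>'_def \<pi>_def)
    have E1: "(\<forall>j\<in>H. W j p \<bullet> v = 0) \<longleftrightarrow> (\<forall>j\<in>H. Fj j x = 0)"
    proof -
      have "W j p \<bullet> v = Fj j x" if j: "j \<in> H" for j
      proof -
        have agree: "\<forall>c\<in>B \<union> H. p $ c = fst x $ c" by (simp add: fstx)
        have "W j p = W j (fst x)" using dep j pU p1U agree by blast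
        moreover have "W j (fst x) \<bullet> v = W j (fst x) \<bullet> snd x"
          unfolding inner_vec_def
        proof (rule sum.cong)
          fix c :: 'i assume "c \<in> UNIV"
          show "W j (fst x) $ c \<bullet> v $ c = W j (fst x) $ c \<bullet> snd x $ c"
          proof (cases "c \<in> B")
            case True then show ?thesis by (simp add: x_def \<pi>'_def)
          next
            case False
            show ?thesis
            proof (cases "c = tc")
              case True then show ?thesis using vtc hv tcB by (simp add: x_def \<pi>'_def)
            next
              case False
              then have "W j (fst x) $ c = 0" using supp j p1U \<open>c \<notin> B\<close> by blast
              then show ?thesis by simp
            qed
          qed
        qed simp
        ultimately show ?thesis by (simp add: Fj_def)
      qed
      then show ?thesis by auto
    qed
    have E2: "(\<forall>j\<in>H. Fj j x = 0) \<longleftrightarrow> Phi x = \<pi> (p, v)"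
    proof -
      have "fst (Phi x) $ c = fst (\<pi> (p, v)) $ c \<longleftrightarrow> (c \<in> H \<longrightarrow> Fj c x = 0)" for c
        using HB by (auto simp: Phi_comp fstx \<pi>_def)
      then have "fst (Phi x) = fst (\<pi> (p, v)) \<longleftrightarrow> (\<forall>j\<in>H. Fj j x = 0)"
        by (auto simp: vec_eq_iff)
      moreover have "snd (Phi x) = snd (\<pi> (p, v))" by (simp add: Phi_comp sndx)
      ultimately show ?thesis by (auto simp: prod_eq_iff)
    qed
    have E3: "Phi x = \<pi> (p, v) \<longleftrightarrow> x = \<Psi> (\<pi> (p, v))"
      using homeomorphism_apply1[OF IFT(6) xU'] homeomorphism_apply2[OF IFT(6) piV] by metis
    have E4: "x = \<Psi> (\<pi> (p, v)) \<longleftrightarrow> (\<forall>h\<in>H. p $ h = g p v $ h)"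
    proof
      assume hx: "x = \<Psi> (\<pi> (p, v))"
      show "\<forall>h\<in>H. p $ h = g p v $ h"
      proof
        fix h assume "h \<in> H"
        then have "fst x $ h = p $ h" using fstx[of h] by simp
        then show "p $ h = g p v $ h" using hx by (simp add: g_def)
      qed
    next
      assume a: "\<forall>h\<in>H. p $ h = g p v $ h"
      define z where "z = \<Psi> (\<pi> (p, v))"
      have zU': "z \<in> U'" using homeomorphism_image2[OF IFT(6)] piV z_def by blast
      have Pz: "Phi z = \<pi> (p, v)" using homeomorphism_apply2[OF IFT(6) piV] z_def by simp
      have "snd z = snd x" using Pz sndx Phi_comp(2)[of z] by simp
      moreover have "fst z $ c = fst x $ c" for c
      proof (cases "c \<in> H")
        case True
        then show ?thesis using a fstx by (simp add: g_def z_def)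
      next
        case False
        then have "fst z $ c = fst (\<pi> (p, v)) $ c" using Phi_comp(1)[of z c] Pz by simp
        then show ?thesis using False by (simp add: fstx \<pi>_def)
      qed
      ultimately have "z = x" by (simp add: prod_eq_iff vec_eq_iff)
      then show "x = \<Psi> (\<pi> (p, v))" by (simp add: z_def)
    qed
    show ?thesis using E1 E2 E3 E4 by blast
  qed
  show "\<exists>N g. open N \<and> (p0, v0) \<in> N \<and> continuous_on N (\<lambda>(p, v). g p v) \<and>
           (\<forall>p v p' v'. (\<forall>c\<in>B. p $ c = p' $ c \<and> v $ c = v' $ c) \<longrightarrow> g p v = g p' v') \<and>
           (\<forall>(p, v)\<in>N. p \<in> U \<and> v $ tc = 1 \<longrightarrow>
              ((\<forall>j\<in>H. W j p \<bullet> v = 0) \<longleftrightarrow> (\<forall>h\<in>H. p $ h = g p v $ h)))"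
  proof (intro exI[of _ N] exI[of _ g] conjI)
    show "open N" by fact
    show "(p0, v0) \<in> N" by fact
    show "continuous_on N (\<lambda>(p, v). g p v)" by fact
    show "\<forall>p v p' v'. (\<forall>c\<in>B. p $ c = p' $ c \<and> v $ c = v' $ c) \<longrightarrow> g p v = g p' v'" by fact
    show "\<forall>(p, v)\<in>N. p \<in> U \<and> v $ tc = 1 \<longrightarrow>
              ((\<forall>j\<in>H. W j p \<bullet> v = 0) \<longleftrightarrow> (\<forall>h\<in>H. p $ h = g p v $ h))"
    proof
      fix z assume zN: "z \<in> N"
      obtain p v where z: "z = (p, v)" by (cases z)
      show "case z of (p, v) \<Rightarrow> p \<in> U \<and> v $ tc = 1 \<longrightarrow>
              ((\<forall>j\<in>H. W j p \<bullet> v = 0) \<longleftrightarrow> (\<forall>h\<in>H. p $ h = g p v $ h))"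
        using equiv[of p v] zN z by simp
    qed
  qed
qed

end


lemma pd_zero_dep:
  assumes "open U" "p \<in> U" "\<And>q. q \<in> U \<Longrightarrow> (\<forall>d. d \<noteq> c \<longrightarrow> q $ d = p $ d) \<Longrightarrow> f q = f p"
  shows "pd c f p = 0"
proof (rule pd_zero_ev)
  show "\<forall>\<^sub>F s in nhds 0. f (p + s *\<^sub>R axis c 1) = f p"
    using ev_in_open[OF assms(1,2), of "axis c 1"]
    by eventually_elim (rule assms(3), auto simp: axis_def)
qed

lemma sum_if_mult: "(\<Sum>i\<in>(UNIV::'i::finite set). (if i = c then 1 else 0) * X i) = (X c :: real)"
proof -
  have "(\<Sum>i\<in>(UNIV::'i set). (if i = c then 1 else 0) * X i) = (\<Sum>i\<in>UNIV. if i = c then X i else 0)"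
    by (rule sum.cong) auto
  then show ?thesis by simp
qed

lemma cauchy_coord:
  assumes U: "open U"
    and z: "\<forall>\<omega>\<in>P. \<forall>p\<in>U. \<omega> p $ c = 0"
    and d: "\<forall>\<omega>\<in>P. \<forall>p\<in>U. \<forall>q\<in>U. (\<forall>d. d \<noteq> c \<longrightarrow> p $ d = q $ d) \<longrightarrow> \<omega> p = \<omega> q"
  shows "cauchy_char U P (\<lambda>p. axis c 1)"
  unfolding cauchy_char_def
proof (intro ballI conjI)
  fix p \<omega> assume p: "p \<in> U" and \<omega>: "\<omega> \<in> P"
  show "\<omega> p \<bullet> axis c 1 = 0" using z p \<omega> by (simp add: inner_axis)
  have "int_d (\<lambda>p. axis c 1) \<omega> p = 0"
  proof -
    have "int_d (\<lambda>p. axis c 1) \<omega> p $ j = 0" for j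
    proof -
      have "int_d (\<lambda>p. axis c 1) \<omega> p $ j = pd c (\<lambda>q. \<omega> q $ j) p - pd j (\<lambda>q. \<omega> q $ c) p"
        unfolding int_d_def by (simp add: axis_def sum_if_mult)
      also have "pd c (\<lambda>q. \<omega> q $ j) p = 0"
      proof (rule pd_zero_dep[OF U p])
        fix q assume q: "q \<in> U" "\<forall>d. d \<noteq> c \<longrightarrow> q $ d = p $ d"
        have "\<omega> q = \<omega> p" using d[rule_format, OF \<omega> q(1) p q(2)[rule_format]] .
        then show "\<omega> q $ j = \<omega> p $ j" by simp
      qed
      also have "pd j (\<lambda>q. \<omega> q $ c) p = 0"
        by (rule pd_zero_on[OF U p]) (use z \<omega> in auto)
      finally show ?thesis by simp
    qed
    then show ?thesis by (simp add: vec_eq_iff)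
  qed
  then show "int_d (\<lambda>p. axis c 1) \<omega> p \<in> sys_at P p" by (simp add: sys_at_def span_zero)
qed

lemma coord_dist_iff:
  fixes x :: "real^'i::finite"
  shows "x \<in> coord_dist C p \<longleftrightarrow> (\<forall>d. d \<notin> C \<longrightarrow> x $ d = 0)"
proof
  assume "x \<in> coord_dist C p"
  moreover have "span ((\<lambda>c. axis c 1) ` C) \<subseteq> {x::real^'i. \<forall>d. d \<notin> C \<longrightarrow> x $ d = 0}"
    by (rule span_minimal) (auto simp: subspace_def axis_def)
  ultimately show "\<forall>d. d \<notin> C \<longrightarrow> x $ d = 0" by (auto simp: coord_dist_def)
next
  assume a: "\<forall>d. d \<notin> C \<longrightarrow> x $ d = 0"
  have "x = (\<Sum>c\<in>C. x $ c *\<^sub>R axis c 1)"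
  proof -
    have "(\<Sum>c\<in>C. x $ c *\<^sub>R axis c 1) $ i = (if i \<in> C then x $ i else 0)" for i
      by (rule sum_axis_nth)
    then show ?thesis using a by (auto simp: vec_eq_iff)
  qed
  also have "\<dots> \<in> span ((\<lambda>c. axis c 1) ` C)"
    by (intro span_sum span_scale span_base) auto
  finally show "x \<in> coord_dist C p" by (simp add: coord_dist_def)
qed

lemma involutive_coord:
  assumes U: "open U"
  shows "involutive U (coord_dist C)"
  unfolding involutive_def
proof (intro allI impI ballI)
  fix v w p assume a: "smooth_map_on U v \<and> smooth_map_on U w \<and> (\<forall>p\<in>U. v p \<in> coord_dist C p \<and> w p \<in> coord_dist C p)"
    and p: "p \<in> U"
  show "lie v w p \<in> coord_dist C p" unfolding coord_dist_iff
  proof (intro allI impI)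
    fix d assume d: "d \<notin> C"
    have "pd e (\<lambda>q. w q $ d) p = 0" for e
      by (rule pd_zero_on[OF U p]) (use a d in \<open>auto simp: coord_dist_iff\<close>)
    moreover have "pd e (\<lambda>q. v q $ d) p = 0" for e
      by (rule pd_zero_on[OF U p]) (use a d in \<open>auto simp: coord_dist_iff\<close>)
    ultimately show "lie v w p $ d = 0" by (simp add: lie_def)
  qed
qed

lemma annih_lemma:
  fixes x :: "real^'i::finite"
  assumes G: "\<forall>g\<in>G. \<forall>d\<in>C. g $ d = 0" and x: "\<forall>d. d \<notin> C \<longrightarrow> x $ d = 0" and th: "\<theta> \<in> span G"
  shows "\<theta> \<bullet> x = 0"
proof -
  have "span G \<subseteq> {\<theta>. \<theta> \<bullet> x = 0}"
  proof (rule span_minimal)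
    show "G \<subseteq> {\<theta>. \<theta> \<bullet> x = 0}"
    proof
      fix g assume "g \<in> G"
      then have gd: "g $ d * x $ d = 0" for d using G x by (cases "d \<in> C") auto
      have "(\<Sum>i\<in>UNIV. g $ i * x $ i) = 0" by (rule sum.neutral) (use gd in auto)
      then show "g \<in> {\<theta>. \<theta> \<bullet> x = 0}" by (simp add: inner_vec_def)
    qed
    show "subspace {\<theta>::real^'i. \<theta> \<bullet> x = 0}"
      by (auto simp: subspace_def inner_add_left)
  qed
  then show ?thesis using th by auto
qed

lemma iter_pd_coord: "iter_pd cs (\<lambda>p::real^'i::finite. p $ c) = (\<lambda>p. p $ c) \<or> (\<exists>k. iter_pd cs (\<lambda>p::real^'i. p $ c) = (\<lambda>p. k))"
proof (induction cs)
  case Nil then show ?case by simp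
next
  case (Cons d cs)
  then show ?case
  proof
    assume "iter_pd cs (\<lambda>p. p $ c) = (\<lambda>p. p $ c)"
    then show ?thesis by (auto simp: pd_coord[abs_def])
  next
    assume "\<exists>k. iter_pd cs (\<lambda>p. p $ c) = (\<lambda>p. k)"
    then show ?thesis by (auto simp: pd_const[abs_def])
  qed
qed

lemma smooth_id: "smooth_map_on U (\<lambda>q::real^'i::finite. q)"
  unfolding smooth_map_on_def smooth_on_def
proof (intro allI conjI ballI)
  fix c :: 'i and cs :: "'i list" and d :: 'i and p :: "real^'i"
  from iter_pd_coord[of cs c]
  show "continuous_on U (iter_pd cs (\<lambda>p. p $ c))"
    by (auto intro: continuous_intros linear_continuous_on[OF bounded_linear_vec_nth])
  have lin: "(\<lambda>s::real. (p + s *\<^sub>R axis d 1) $ c) = (\<lambda>s. p $ c + s * axis d 1 $ c)"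
    by (simp add: fun_eq_iff)
  have d1: "((\<lambda>s::real. p $ c + s * axis d 1 $ c) has_real_derivative axis d 1 $ c) (at 0)"
    by (auto intro!: derivative_eq_intros)
  have d2: "((\<lambda>s::real. k) has_real_derivative 0) (at 0)" for k :: real
    by (rule DERIV_const)
  from iter_pd_coord[of cs c]
  show "(\<lambda>s. iter_pd cs (\<lambda>p. p $ c) (p + s *\<^sub>R axis d 1)) field_differentiable at 0"
  proof
    assume "iter_pd cs (\<lambda>p. p $ c) = (\<lambda>p. p $ c)"
    then show ?thesis using d1 lin unfolding field_differentiable_def by auto
  next
    assume "\<exists>k. iter_pd cs (\<lambda>p. p $ c) = (\<lambda>p. k)"
    then obtain k where "iter_pd cs (\<lambda>p. p $ c) = (\<lambda>p. k)" by blast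
    then show ?thesis unfolding field_differentiable_def by (auto intro!: exI[of _ 0] d2)
  qed
qed

lemma pullback_id: "pullback (\<lambda>q. q) \<omega> = \<omega>"
  by (auto simp: pullback_def pd_coord vec_eq_iff fun_eq_iff if_distrib cong: if_cong)

lemma param_id:
  assumes U: "open U" and tcH: "tc \<notin> H"
    and sm: "\<forall>j\<in>H. smooth_map_on U (W j)"
    and z: "\<forall>j\<in>H. \<forall>q\<in>U. \<forall>h\<in>H. W j q $ h = 0"
    and reg: "\<forall>q\<in>U. \<forall>v. v $ tc = 1 \<longrightarrow> regular_mat H H (\<lambda>j h. pd h (\<lambda>q'. W j q' \<bullet> v) q)"
  shows "parameterizable tc U H W (H :: 'i::finite set)"
  unfolding parameterizable_def
  using U tcH sm z reg smooth_id[of U]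
  by (intro conjI exI[of _ U] exI[of _ "\<lambda>q. q"] exI[of _ W]) (auto simp: pullback_id)



theorem proposition10:
  fixes m :: nat and nb :: nat
    and tc :: "'i::finite"
    and Y Zh :: "nat \<Rightarrow> 'i set"
    and U :: "(real ^ 'i) set"
    and w :: "nat \<Rightarrow> 'i \<Rightarrow> real ^ 'i \<Rightarrow> real ^ 'i"
    and S :: "nat \<Rightarrow> (real ^ 'i \<Rightarrow> real ^ 'i) set"
  assumes m2: "m \<ge> 2" and nb_def: "nb = m - 1"
    and blk_disj: "\<forall>k\<in>{1..m}. Y k \<inter> Zh k = {}"
    and blk_disj2: "\<forall>k\<in>{1..m}. \<forall>l\<in>{1..m}. k \<noteq> l \<longrightarrow> (Y k \<union> Zh k) \<inter> (Y l \<union> Zh l) = {}"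
    and blk_cover: "(\<Union>k\<in>{1..m}. Y k \<union> Zh k) = UNIV - {tc}"
    and first_blk: "Zh 1 = {}" and last_blk: "Y m = {}"
    and U_open: "open U"
    and w_smooth: "\<forall>i\<in>{1..nb}. \<forall>j\<in>Zh (Suc i). smooth_map_on U (w i j)"
    and w_support: "\<forall>i\<in>{1..nb}. \<forall>j\<in>Zh (Suc i). \<forall>p\<in>U. \<forall>c.
        c \<notin> (\<Union>k\<in>{1..i}. Y k \<union> Zh k) \<and> c \<noteq> tc \<longrightarrow> w i j p $ c = 0"
    and w_depends: "\<forall>i\<in>{1..nb}. \<forall>j\<in>Zh (Suc i). \<forall>p\<in>U. \<forall>q\<in>U.
        (\<forall>c\<in>(\<Union>k\<in>{1..i}. Y k \<union> Zh k) \<union> Zh (Suc i). p $ c = q $ c) \<longrightarrow> w i j p = w i j q"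
    and jac_regular: "\<forall>i\<in>{1..nb}. \<forall>p\<in>U. \<forall>v. v $ tc = 1 \<longrightarrow>
        regular_mat (Zh (Suc i)) (Zh (Suc i)) (\<lambda>j h. pd h (\<lambda>q. w i j q \<bullet> v) p)"
    and S_def: "\<forall>k. S k = {w i j | i j. i \<in> {1..nb - k} \<and> j \<in> Zh (Suc i)}"
  shows
    "(\<forall>k<nb. involutive U (coord_dist (Zh (m - k)))
          \<and> (\<forall>p\<in>U. coord_dist (Zh (m - k)) p \<subseteq> vert_annih tc (S k) p)
          \<and> (\<forall>c\<in>Zh (m - k). cauchy_char U (S (Suc k)) (\<lambda>p. axis c 1)))
     \<and> (\<forall>k\<in>{1..nb}. parameterizable tc U (Zh (Suc k)) (w k) (Zh (Suc k))
          \<and> locally_solvable tc U (Zh (Suc k)) (w k) (Zh (Suc k)) (\<Union>l\<in>{1..k}. Y l \<union> Zh l))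
     \<and> (\<forall>k\<in>{1..m}. \<forall>c\<in>Y k. cauchy_char U (S (m - k)) (\<lambda>p. axis c 1))"
proof -
  have tcn: "tc \<notin> Y k \<union> Zh k" if "k \<in> {1..m}" for k
    using blk_cover that by blast
  have notin: "c \<notin> (\<Union>l\<in>{1..i}. Y l \<union> Zh l)" if "r \<in> {1..m}" "c \<in> Y r \<union> Zh r" "i < r" for r c i
  proof
    assume "c \<in> (\<Union>l\<in>{1..i}. Y l \<union> Zh l)"
    then obtain l where l: "l \<in> {1..i}" "c \<in> Y l \<union> Zh l" by blast
    have lm: "l \<in> {1..m}" and ne: "r \<noteq> l" using l that by auto
    have "(Y r \<union> Zh r) \<inter> (Y l \<union> Zh l) = {}" using blk_disj2[rule_format, OF that(1) lm ne] .
    then show False using l(2) that(2) by blast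
  qed
  have notinZ: "c \<notin> Zh l" if "r \<in> {1..m}" "c \<in> Y r \<union> Zh r" "l < r" "l \<ge> 1" for r c l
  proof -
    have lm: "l \<in> {1..m}" and ne: "r \<noteq> l" using that by auto
    have "(Y r \<union> Zh r) \<inter> (Y l \<union> Zh l) = {}" using blk_disj2[rule_format, OF that(1) lm ne] .
    then show ?thesis using that(2) by blast
  qed
  have Sdef: "\<omega> \<in> S k \<longleftrightarrow> (\<exists>i j. \<omega> = w i j \<and> i \<in> {1..nb - k} \<and> j \<in> Zh (Suc i))" for \<omega> k
    using S_def by auto
  have cauchy_gen: "cauchy_char U (S k) (\<lambda>p. axis c 1)"
    if r: "r \<in> {1..m}" and c: "c \<in> Y r \<union> Zh r" and cZ: "c \<notin> Zh r \<or> nb - k < r - 1"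
      and kr: "nb - k < r" for r c k
  proof (rule cauchy_coord[OF U_open])
    show "\<forall>\<omega>\<in>S k. \<forall>p\<in>U. \<omega> p $ c = 0"
    proof (intro ballI)
      fix \<omega> p assume "\<omega> \<in> S k" "p \<in> U"
      then obtain i j where ij: "\<omega> = w i j" "i \<in> {1..nb - k}" "j \<in> Zh (Suc i)" using Sdef by blast
      have "c \<notin> (\<Union>l\<in>{1..i}. Y l \<union> Zh l)" using notin[OF r c] ij kr by auto
      moreover have "c \<noteq> tc" using tcn[OF r] c by auto
      moreover have inb: "i \<in> {1..nb}" using ij by auto
      ultimately have "w i j p $ c = 0"
        using w_support[rule_format, OF inb ij(3) \<open>p \<in> U\<close>] by blast
      then show "\<omega> p $ c = 0" using ij(1) by simp
    qed
    show "\<forall>\<omega>\<in>S k. \<forall>p\<in>U. \<forall>q\<in>U. (\<forall>d. d \<noteq> c \<longrightarrow> p $ d = q $ d) \<longrightarrow> \<omega> p = \<omega> q"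
    proof (intro ballI impI)
      fix \<omega> p q assume "\<omega> \<in> S k" "p \<in> U" "q \<in> U" and pq: "\<forall>d. d \<noteq> c \<longrightarrow> p $ d = q $ d"
      then obtain i j where ij: "\<omega> = w i j" "i \<in> {1..nb - k}" "j \<in> Zh (Suc i)" using Sdef by blast
      have n1: "c \<notin> (\<Union>l\<in>{1..i}. Y l \<union> Zh l)" using notin[OF r c] ij kr by auto
      have n2: "c \<notin> Zh (Suc i)"
      proof (cases "Suc i < r")
        case True then show ?thesis using notinZ[OF r c] by auto
      next
        case False
        then have "Suc i = r" using ij kr by auto
        then show ?thesis using cZ ij by auto
      qed
      have agree: "\<forall>c'\<in>(\<Union>l\<in>{1..i}. Y l \<union> Zh l) \<union> Zh (Suc i). p $ c' = q $ c'"
      proof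
        fix c' assume h: "c' \<in> (\<Union>l\<in>{1..i}. Y l \<union> Zh l) \<union> Zh (Suc i)"
        then have "c' \<noteq> c" using n1 n2 by auto
        then show "p $ c' = q $ c'" using pq by simp
      qed
      have inb: "i \<in> {1..nb}" using ij by auto
      have "w i j p = w i j q" using w_depends[rule_format, OF inb ij(3) \<open>p \<in> U\<close> \<open>q \<in> U\<close> agree[rule_format]] .
      then show "\<omega> p = \<omega> q" using ij(1) by simp
    qed
  qed
  have A: "\<forall>k<nb. involutive U (coord_dist (Zh (m - k)))
          \<and> (\<forall>p\<in>U. coord_dist (Zh (m - k)) p \<subseteq> vert_annih tc (S k) p)
          \<and> (\<forall>c\<in>Zh (m - k). cauchy_char U (S (Suc k)) (\<lambda>p. axis c 1))"
  proof (intro allI impI conjI ballI)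
    fix k assume k: "k < nb"
    show "involutive U (coord_dist (Zh (m - k)))" by (rule involutive_coord[OF U_open])
    have r: "m - k \<in> {1..m}" using k nb_def by auto
    fix p assume "p \<in> U"
    show "coord_dist (Zh (m - k)) p \<subseteq> vert_annih tc (S k) p"
    proof
      fix x assume "x \<in> coord_dist (Zh (m - k)) p"
      then have x: "\<forall>d. d \<notin> Zh (m - k) \<longrightarrow> x $ d = 0" by (simp add: coord_dist_iff)
      have G: "\<forall>g\<in>(\<lambda>\<omega>. \<omega> p) ` S k \<union> {axis tc 1}. \<forall>d\<in>Zh (m - k). g $ d = 0"
      proof (intro ballI)
        fix g d assume g: "g \<in> (\<lambda>\<omega>. \<omega> p) ` S k \<union> {axis tc 1}" and d: "d \<in> Zh (m - k)"
        have dtc: "d \<noteq> tc" using tcn[OF r] d by auto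
        show "g $ d = 0"
        proof (cases "g = axis tc 1")
          case True then show ?thesis using dtc by (simp add: axis_def)
        next
          case False
          then obtain \<omega> where om: "\<omega> \<in> S k" "g = \<omega> p" using g by auto
          then obtain i j where ij0: "\<omega> = w i j" "i \<in> {1..nb - k}" "j \<in> Zh (Suc i)"
            using Sdef[of \<omega> k] by blast
          then have ij: "g = w i j p" "i \<in> {1..nb - k}" "j \<in> Zh (Suc i)" using om by auto
          have "d \<notin> (\<Union>l\<in>{1..i}. Y l \<union> Zh l)" using notin[OF r, of d i] d ij nb_def by auto
          moreover have inb: "i \<in> {1..nb}" using ij by auto
          ultimately have "w i j p $ d = 0"
            using w_support[rule_format, OF inb ij(3) \<open>p \<in> U\<close>] dtc by blast
          then show ?thesis using ij(1) by simp
        qed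
      qed
      show "x \<in> vert_annih tc (S k) p"
        unfolding vert_annih_def using annih_lemma[OF G x] by blast
    qed
  next
    fix k c assume k: "k < nb" and c: "c \<in> Zh (m - k)"
    have r: "m - k \<in> {1..m}" using k nb_def by auto
    show "cauchy_char U (S (Suc k)) (\<lambda>p. axis c 1)"
      by (rule cauchy_gen[OF r]) (use c k nb_def in auto)
  qed
  have B: "\<forall>k\<in>{1..nb}. parameterizable tc U (Zh (Suc k)) (w k) (Zh (Suc k))
          \<and> locally_solvable tc U (Zh (Suc k)) (w k) (Zh (Suc k)) (\<Union>l\<in>{1..k}. Y l \<union> Zh l)"
  proof (intro ballI conjI)
    fix k assume k: "k \<in> {1..nb}"
    have r: "Suc k \<in> {1..m}" using k nb_def by auto
    have tcH: "tc \<notin> Zh (Suc k)" using tcn[OF r] by auto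
    have tcB: "tc \<notin> (\<Union>l\<in>{1..k}. Y l \<union> Zh l)" using tcn k nb_def by auto
    have HB: "Zh (Suc k) \<inter> (\<Union>l\<in>{1..k}. Y l \<union> Zh l) = {}" using notin[OF r] by blast
    have z: "\<forall>j\<in>Zh (Suc k). \<forall>q\<in>U. \<forall>h\<in>Zh (Suc k). w k j q $ h = 0"
    proof (intro ballI)
      fix j q h assume j: "j \<in> Zh (Suc k)" and q: "q \<in> U" and h: "h \<in> Zh (Suc k)"
      have "h \<notin> (\<Union>l\<in>{1..k}. Y l \<union> Zh l) \<and> h \<noteq> tc" using HB tcH h by blast
      then show "w k j q $ h = 0" using w_support[rule_format, OF k j q] by blast
    qed
    show "parameterizable tc U (Zh (Suc k)) (w k) (Zh (Suc k))"
      by (rule param_id[OF U_open tcH]) (use w_smooth jac_regular k z in auto)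
    show "locally_solvable tc U (Zh (Suc k)) (w k) (Zh (Suc k)) (\<Union>l\<in>{1..k}. Y l \<union> Zh l)"
    proof (rule loc_solv[OF U_open HB tcH tcB])
      show "\<forall>j\<in>Zh (Suc k). \<forall>c. smooth_on U (\<lambda>p. w k j p $ c)"
        using w_smooth k by (auto simp: smooth_map_on_def)
      show "\<forall>j\<in>Zh (Suc k). \<forall>p\<in>U. \<forall>c. c \<notin> (\<Union>l\<in>{1..k}. Y l \<union> Zh l) \<and> c \<noteq> tc \<longrightarrow> w k j p $ c = 0"
        using w_support k by blast
      show "\<forall>j\<in>Zh (Suc k). \<forall>p\<in>U. \<forall>q\<in>U. (\<forall>c\<in>(\<Union>l\<in>{1..k}. Y l \<union> Zh l) \<union> Zh (Suc k). p $ c = q $ c) \<longrightarrow> w k j p = w k j q"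
        using w_depends k by blast
      show "\<forall>p\<in>U. \<forall>v. v $ tc = 1 \<longrightarrow> regular_mat (Zh (Suc k)) (Zh (Suc k)) (\<lambda>j h. pd h (\<lambda>q. w k j q \<bullet> v) p)"
        using jac_regular k by blast
    qed
  qed
  have C: "\<forall>k\<in>{1..m}. \<forall>c\<in>Y k. cauchy_char U (S (m - k)) (\<lambda>p. axis c 1)"
  proof (intro ballI)
    fix k c assume k: "k \<in> {1..m}" and c: "c \<in> Y k"
    show "cauchy_char U (S (m - k)) (\<lambda>p. axis c 1)"
      by (rule cauchy_gen[OF k]) (use c k nb_def blk_disj in auto)
  qed
  show ?thesis using A B C by blast
qed


end
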